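(* Let $\xi:[0,\ell)\to\mathbb{R}^n$ be a self-contracted curve and $\tau\in[0,\ell)$. Let $$\Delta:=\Big\{\tfrac{\xi(t)-\xi(\tau)}{\|\xi(t)-\xi(\tau)\|}\ :\ t\in(\tau,\ell),\ \xi(t)\ne\xi(\tau)\Big\}\subset\mathbb{S}^{n-1},$$ and let $\bar v_\tau\in\mathbb{S}^{n-1}$ be any vector with $\angle(\bar v_\tau,w)\le\theta_n$ for all $w\in\Delta$, where $\theta_n=\arccos((2\cdot3^n)^{-1})$ (such a vector exists). Put $\varepsilon_n:=(\cos\theta_n)/3=(2\cdot3^{n+1})^{-1}$. Then for every $T\in(\tau,\ell)$ and every $v\in\mathbb{S}^{n-1}$ with $\|v-\bar v_\tau\|\le\varepsilon_n$, $$\big|\Pi_v(\Xi(T))\big|\le\big|\Pi_v(\Xi(\tau))\big|-\varepsilon_n\|\xi(T)-\xi(\tau)\|$$ (with the convention that the inequality is trivially true if $|\Pi_v(\Xi(\tau))|=\infty$).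
   Context: Let $(X,d)$ be a metric space and $\ell\in(0,\infty]$. A map $\xi:[0,\ell)\to X$ (not necessarily continuous) is called self-contracted if $d(\xi(t_2),\xi(t_3))\le d(\xi(t_1),\xi(t_3))$ for all $0\le t_1\le t_2\le t_3<\ell$. For $t\in[0,\ell)$, $\Xi(t):=\xi([t,\ell))$. Here $X=\mathbb{R}^n$ with Euclidean norm $\|\cdot\|$, inner product $\langle\cdot,\cdot\rangle$; $\mathbb{S}^{n-1}$ is the unit sphere and $\angle$ the Euclidean angle. For $v\in\mathbb{S}^{n-1}$ and $\Omega\subset\mathbb{R}^n$, $\Pi_v(\Omega)\subset\mathbb{R}$ is the closed convex hull (smallest closed interval) containing $\{\langle x,v\rangle: x\in\Omega\}$, and $|\cdot|$ denotes one-dimensional Lebesgue measure. *)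

theory Defs
  imports "HOL-Analysis.Analysis"
begin

definition param_dom :: "ereal \<Rightarrow> real set" where
  "param_dom l = {t. 0 \<le> t \<and> ereal t < l}"

definition self_contracted :: "ereal \<Rightarrow> (real \<Rightarrow> 'a::metric_space) \<Rightarrow> bool" where
  "self_contracted l \<xi> \<longleftrightarrow>
     (\<forall>t1 t2 t3. t1 \<in> param_dom l \<and> t2 \<in> param_dom l \<and> t3 \<in> param_dom l \<and>
        t1 \<le> t2 \<and> t2 \<le> t3 \<longrightarrow> dist (\<xi> t2) (\<xi> t3) \<le> dist (\<xi> t1) (\<xi> t3))"

definition tail_set :: "ereal \<Rightarrow> (real \<Rightarrow> 'a) \<Rightarrow> real \<Rightarrow> 'a set" where
  "tail_set l \<xi> t = \<xi> ` {s. t \<le> s \<and> ereal s < l}"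

text \<open>Pi_v(Omega): smallest closed interval (closed convex hull) containing the projections.\<close>
definition proj_hull :: "'a::real_inner \<Rightarrow> 'a set \<Rightarrow> real set" where
  "proj_hull v \<Omega> = closure (convex hull ((\<lambda>x. inner x v) ` \<Omega>))"

definition eangle :: "'a::real_inner \<Rightarrow> 'a \<Rightarrow> real" where
  "eangle u w = arccos (inner u w / (norm u * norm w))"

definition theta_n :: "nat \<Rightarrow> real" where
  "theta_n n = arccos (1 / (2 * 3 ^ n))"

definition eps_n :: "nat \<Rightarrow> real" where
  "eps_n n = cos (theta_n n) / 3"

end

theory Submission
  imports Defs
begin

lemma hull_measure_gap:
  fixes A B :: "real set" and p0 e :: real
  assumes AB: "A \<subseteq> B" and p0B: "p0 \<in> B" and Ane: "A \<noteq> {}"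
    and Age: "\<forall>a\<in>A. p0 + e \<le> a" and e0: "0 \<le> e"
  shows "emeasure lborel (closure (convex hull A))
         \<le> emeasure lborel (closure (convex hull B)) - ennreal e"
proof -
  define HA where "HA = closure (convex hull A)"
  define HB where "HB = closure (convex hull B)"
  have sub: "HA \<subseteq> HB" unfolding HA_def HB_def by (intro closure_mono hull_mono AB)
  have cvx: "convex HB" unfolding HB_def by (simp add: convex_closure)
  have inB: "B \<subseteq> HB" unfolding HB_def using hull_subset[of B convex] closure_subset[of "convex hull B"] by (rule subset_trans)
  obtain a where aA: "a \<in> A" using Ane by blast
  have ivl: "{p0..<p0+e} \<subseteq> HB"
  proof
    fix x assume x: "x \<in> {p0..<p0+e}"
    have "is_interval HB" using cvx is_interval_convex_1 by blast
    moreover have "p0 \<in> HB" using p0B inB by blast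
    moreover have "a \<in> HB" using aA AB inB by blast
    moreover have "p0 \<le> x" "x \<le> a" using x Age aA by auto
    ultimately show "x \<in> HB" unfolding is_interval_1 by blast
  qed
  have HAge: "HA \<subseteq> {p0+e..}"
  proof -
    have "convex hull A \<subseteq> {p0+e..}"
      by (rule hull_minimal) (use Age in auto)
    then show ?thesis unfolding HA_def by (intro closure_minimal) auto
  qed
  have disj: "HA \<inter> {p0..<p0+e} = {}" using HAge by auto
  have "emeasure lborel HA + emeasure lborel {p0..<p0+e} = emeasure lborel (HA \<union> {p0..<p0+e})"
    by (rule plus_emeasure) (use disj in \<open>auto simp: HA_def\<close>)
  also have "\<dots> \<le> emeasure lborel HB"
    by (rule emeasure_mono) (use sub ivl in \<open>auto simp: HB_def\<close>)
  finally have "emeasure lborel HA + ennreal e \<le> emeasure lborel HB"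
    using e0 by simp
  then show ?thesis unfolding HA_def HB_def by (simp add: ennreal_le_minus_iff)
qed

theorem mainTheorem4:
  fixes \<xi> :: "real \<Rightarrow> real ^ 'n" and l :: ereal and \<tau> T :: real and vbar v :: "real ^ 'n"
  assumes "l > 0"
    and "self_contracted l \<xi>"
    and "\<tau> \<in> param_dom l"
    and "norm vbar = 1"
    and "\<forall>w \<in> {(\<xi> t - \<xi> \<tau>) /\<^sub>R norm (\<xi> t - \<xi> \<tau>) | t. \<tau> < t \<and> ereal t < l \<and> \<xi> t \<noteq> \<xi> \<tau>}.
           eangle vbar w \<le> theta_n CARD('n)"
    and "\<tau> < T" and "ereal T < l"
    and "norm v = 1"
    and "norm (v - vbar) \<le> eps_n CARD('n)"
  shows "emeasure lborel (proj_hull v (tail_set l \<xi> T))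
         \<le> emeasure lborel (proj_hull v (tail_set l \<xi> \<tau>))
            - ennreal (eps_n CARD('n) * norm (\<xi> T - \<xi> \<tau>))"
proof -
  note sc = assms(2) and ang = assms(5)
  define c :: real where "c = 1 / (2 * 3 ^ CARD('n))"
  have p1: "(1::real) \<le> 3 ^ CARD('n)" by simp
  have p2: "(1::real) \<le> 2 * 3 ^ CARD('n)" using p1 by linarith
  have c0: "0 < c" "c \<le> 1" unfolding c_def using p2 by auto
  have th: "theta_n CARD('n) = arccos c" unfolding theta_n_def c_def by simp
  have eps: "eps_n CARD('n) = c / 3" unfolding eps_n_def th using c0 by (simp add: cos_arccos)
  define D where "D = norm (\<xi> T - \<xi> \<tau>)"
  have tau0: "0 \<le> \<tau>" "ereal \<tau> < l" using assms(3) by (auto simp: param_dom_def)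
  have key1: "c * norm (\<xi> t - \<xi> \<tau>) \<le> inner (\<xi> t - \<xi> \<tau>) vbar"
    if t: "\<tau> < t" "ereal t < l" for t
  proof (cases "\<xi> t = \<xi> \<tau>")
    case True then show ?thesis by simp
  next
    case False
    define w where "w = (\<xi> t - \<xi> \<tau>) /\<^sub>R norm (\<xi> t - \<xi> \<tau>)"
    have nw: "norm w = 1" using False by (simp add: w_def)
    have "w \<in> {(\<xi> t - \<xi> \<tau>) /\<^sub>R norm (\<xi> t - \<xi> \<tau>) | t. \<tau> < t \<and> ereal t < l \<and> \<xi> t \<noteq> \<xi> \<tau>}"
      unfolding w_def using t False by blast
    hence "eangle vbar w \<le> arccos c" using ang th by simp
    hence le: "arccos (inner vbar w) \<le> arccos c" unfolding eangle_def using nw assms(4) by simp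
    have "\<bar>inner vbar w\<bar> \<le> 1"
      using Cauchy_Schwarz_ineq2[of vbar w] nw assms(4) by simp
    hence "c \<le> inner vbar w" using le arccos_less_mono[of c "inner vbar w"] c0 by force
    hence "c * norm (\<xi> t - \<xi> \<tau>) \<le> inner vbar w * norm (\<xi> t - \<xi> \<tau>)"
      by (simp add: mult_right_mono)
    also have "\<dots> = inner (\<xi> t - \<xi> \<tau>) vbar" using False
      by (simp add: w_def inner_commute)
    finally show ?thesis .
  qed
  have key2: "2 * (c/3) * norm (\<xi> t - \<xi> \<tau>) \<le> inner (\<xi> t - \<xi> \<tau>) v"
    if t: "\<tau> < t" "ereal t < l" for t
  proof -
    have "inner (\<xi> t - \<xi> \<tau>) v = inner (\<xi> t - \<xi> \<tau>) vbar + inner (\<xi> t - \<xi> \<tau>) (v - vbar)"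
      by (simp add: inner_diff_right)
    moreover have "- (norm (\<xi> t - \<xi> \<tau>) * (c/3)) \<le> inner (\<xi> t - \<xi> \<tau>) (v - vbar)"
    proof -
      have "\<bar>inner (\<xi> t - \<xi> \<tau>) (v - vbar)\<bar> \<le> norm (\<xi> t - \<xi> \<tau>) * norm (v - vbar)"
        by (rule Cauchy_Schwarz_ineq2)
      also have "\<dots> \<le> norm (\<xi> t - \<xi> \<tau>) * (c/3)"
        using assms(9) eps by (intro mult_left_mono) auto
      finally show ?thesis by linarith
    qed
    moreover have "2 * (c/3) * norm (\<xi> t - \<xi> \<tau>) = c * norm (\<xi> t - \<xi> \<tau>) - norm (\<xi> t - \<xi> \<tau>) * (c/3)"
      by (simp add: algebra_simps)
    ultimately show ?thesis using key1[OF t] by linarith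
  qed
  have key3: "inner (\<xi> \<tau>) v + c/3 * D \<le> inner (\<xi> t) v"
    if t: "T \<le> t" "ereal t < l" for t
  proof -
    have "dist (\<xi> T) (\<xi> t) \<le> dist (\<xi> \<tau>) (\<xi> t)"
      proof -
      have "T \<in> param_dom l" "t \<in> param_dom l" using tau0 t assms(6,7) by (auto simp: param_dom_def)
      moreover have "\<tau> \<le> T" using assms(6) by simp
      ultimately show ?thesis using sc assms(3) t(1) unfolding self_contracted_def by blast
    qed
    hence "D \<le> 2 * norm (\<xi> t - \<xi> \<tau>)"
      unfolding D_def dist_norm using norm_triangle_ineq[of "\<xi> T - \<xi> t" "\<xi> t - \<xi> \<tau>"]
      by (simp add: norm_minus_commute)
    hence "c/3 * D \<le> 2 * (c/3) * norm (\<xi> t - \<xi> \<tau>)" using c0 by simp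
    also have "\<dots> \<le> inner (\<xi> t - \<xi> \<tau>) v" using key2 t assms(6) by simp
    finally show ?thesis by (simp add: inner_diff_left)
  qed
  show ?thesis unfolding proj_hull_def eps D_def[symmetric]
  proof (rule hull_measure_gap)
    show "(\<lambda>x. inner x v) ` tail_set l \<xi> T \<subseteq> (\<lambda>x. inner x v) ` tail_set l \<xi> \<tau>"
      unfolding tail_set_def using assms(6) by auto
    show "inner (\<xi> \<tau>) v \<in> (\<lambda>x. inner x v) ` tail_set l \<xi> \<tau>"
      unfolding tail_set_def using tau0 by auto
    show "(\<lambda>x. inner x v) ` tail_set l \<xi> T \<noteq> {}"
      unfolding tail_set_def using assms(7) by auto
    show "\<forall>a\<in>(\<lambda>x. inner x v) ` tail_set l \<xi> T. inner (\<xi> \<tau>) v + c / 3 * D \<le> a"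
      unfolding tail_set_def using key3 by auto
    show "0 \<le> c / 3 * D" using c0 by (simp add: D_def)
  qed
qed

end
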